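(* Let $n \geq 1$ be an integer and $q$ an arbitrary prime power. Then $m(n,q) \geq \frac{q^n-1}{q-1}$; that is, there exist affine subspaces $A_1,\ldots,A_m$ and $B_1,\ldots,B_m$ of the $n$-dimensional affine space $W$ over $\mathbb{F}_q$, with $m = \frac{q^n-1}{q-1}$, such that $A_i \cap B_i = \emptyset$ for each $1 \leq i \leq m$ and $A_i \cap B_j \neq \emptyset$ whenever $1 \leq i < j \leq m$.
   Context: Let $W$ be the $n$-dimensional affine space over the finite field $\mathbb{F}_q$; an affine subspace is a translate $v+U$ of a linear subspace $U$ of $\mathbb{F}_q^n$. A pair of families of affine subspaces $(A_i,B_i)_{1\le i\le m}$ of $W$ is called cross-intersecting if $A_i \cap B_i = \emptyset$ for each $1 \le i \le m$ and $A_i \cap B_j \neq \emptyset$ whenever $1 \le i < j \le m$. $m(n,q)$ denotes the maximal size $m$ of a cross-intersecting pair of families of affine subspaces $(A_i,B_i)_{1 \le i \le m}$ of $W$. *)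

theory Defs
  imports "HOL-Analysis.Analysis"
begin

definition affine_subspace_F :: "('a::field ^ 'n) set \<Rightarrow> bool" where
  "affine_subspace_F A \<longleftrightarrow> (\<exists>v U. vec.subspace U \<and> A = (\<lambda>u. v + u) ` U)"

definition cross_intersecting_F :: "nat \<Rightarrow> (nat \<Rightarrow> ('a::field ^ 'n) set) \<Rightarrow> (nat \<Rightarrow> ('a ^ 'n) set) \<Rightarrow> bool" where
  "cross_intersecting_F m A B \<longleftrightarrow>
     (\<forall>i\<in>{1..m}. affine_subspace_F (A i) \<and> affine_subspace_F (B i)) \<and>
     (\<forall>i\<in>{1..m}. A i \<inter> B i = {}) \<and>
     (\<forall>i j. 1 \<le> i \<longrightarrow> i < j \<longrightarrow> j \<le> m \<longrightarrow> A i \<inter> B j \<noteq> {})"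

end

theory Submission imports Defs begin

definition dotF :: "'a::field ^ 'n \<Rightarrow> 'a ^ 'n \<Rightarrow> 'a" where
  "dotF a y = (\<Sum>k\<in>UNIV. a$k * y$k)"

lemma dotF_add: "dotF a (x + y) = dotF a x + dotF a y"
  by (simp add: dotF_def distrib_left sum.distrib)

lemma dotF_scale: "dotF a (c *s y) = c * dotF a y"
  by (simp add: dotF_def sum_distrib_left mult.left_commute)

lemma dotF_scale_l: "dotF (c *s a) y = c * dotF a y"
  by (simp add: dotF_def sum_distrib_left mult.assoc)

lemma dotF_diff_l: "dotF (a - b) y = dotF a y - dotF b y"
  by (simp add: dotF_def left_diff_distrib sum_subtractf)

lemma dotF_axis: "dotF a (axis k c) = a$k * c"
  by (simp add: dotF_def axis_def if_distrib cong: if_cong)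

lemma dotF_zero: "dotF a 0 = 0"
  by (simp add: dotF_def)

lemma sub0: "vec.subspace {y. dotF a y = (0::'a::field)}"
  by (auto simp: vec.subspace_def dotF_add dotF_scale dotF_zero)

lemma aff0: "affine_subspace_F {y. dotF a y = (0::'a::field)}"
  unfolding affine_subspace_F_def
  by (rule exI[of _ 0], rule exI[of _ "{y. dotF a y = 0}"]) (simp add: sub0)

lemma aff1:
  assumes "a \<noteq> (0::'a::field^'n)"
  shows "affine_subspace_F {y. dotF a y = 1}"
proof -
  obtain k where k: "a$k \<noteq> 0" using assms by (auto simp: vec_eq_iff)
  define v where "v = axis k (1 / a$k)"
  have dv: "dotF a v = 1" using k by (simp add: v_def dotF_axis)
  have "{y. dotF a y = 1} = (\<lambda>u. v + u) ` {y. dotF a y = 0}"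
  proof (intro set_eqI iffI)
    fix y assume "y \<in> {y. dotF a y = 1}"
    then have "y - v \<in> {y. dotF a y = 0}" "y = v + (y - v)"
      using dotF_add[of a v "y - v"] dv by auto
    then show "y \<in> (\<lambda>u. v + u) ` {y. dotF a y = 0}" by blast
  next
    fix y assume "y \<in> (\<lambda>u. v + u) ` {y. dotF a y = 0}"
    then show "y \<in> {y. dotF a y = 1}" using dv by (auto simp: dotF_add)
  qed
  then show ?thesis unfolding affine_subspace_F_def using sub0 by blast
qed

lemma solve:
  assumes a: "a \<noteq> (0::'a::field^'n)" and b: "\<forall>c. b \<noteq> c *s a"
  shows "\<exists>y. dotF a y = 0 \<and> dotF b y = 1"
proof -
  obtain k where k: "a$k \<noteq> 0" using a by (auto simp: vec_eq_iff)
  define b' where "b' = b - (b$k / a$k) *s a"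
  have bk: "b'$k = 0" using k by (simp add: b'_def)
  have "b' \<noteq> 0" using b by (auto simp: b'_def)
  then obtain l where l: "b'$l \<noteq> 0" by (auto simp: vec_eq_iff)
  have lk: "l \<noteq> k" using l bk by auto
  define t where "t = - (a$l / b'$l) / a$k"
  define y where "y = axis l (1 / b'$l) + axis k t"
  have ay: "dotF a y = 0" using k l
    by (simp add: y_def dotF_add dotF_axis t_def field_simps)
  have "dotF b' y = 1" using l bk
    by (simp add: y_def dotF_add dotF_axis)
  moreover have "dotF b' y = dotF b y" using ay
    by (simp add: b'_def dotF_diff_l dotF_scale_l)
  ultimately show ?thesis using ay by auto
qed


definition cls :: "'a::field ^ 'n \<Rightarrow> ('a ^ 'n) set" where
  "cls a = (\<lambda>c. c *s a) ` (UNIV - {0})"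

lemma cls_sub:
  assumes "x \<in> cls a" "x \<in> cls b"
  shows "cls a \<subseteq> cls b"
proof
  fix z assume "z \<in> cls a"
  then obtain e where e: "e \<noteq> 0" "z = e *s a" by (auto simp: cls_def)
  obtain c where c: "c \<noteq> 0" "x = c *s a" using assms by (auto simp: cls_def)
  obtain d where d: "d \<noteq> 0" "x = d *s b" using assms by (auto simp: cls_def)
  have "z = (e / c) *s x" using c e by (simp add: vector_smult_assoc)
  also have "\<dots> = (e / c * d) *s b" using d by (simp add: vector_smult_assoc)
  finally show "z \<in> cls b" using c d e unfolding cls_def by auto
qed

lemma card_cls:
  assumes "a \<noteq> (0::'a::{finite,field}^'n)"
  shows "card (cls a) = CARD('a) - 1"
proof -
  have "inj_on (\<lambda>c. c *s a) (UNIV - {0})"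
  proof (rule inj_onI)
    fix c d assume "c *s a = d *s a"
    then have "(c - d) *s a = 0" by (simp add: vec_eq_iff algebra_simps)
    then show "c = d" using assms by (auto simp: vec_eq_iff)
  qed
  then show ?thesis unfolding cls_def by (simp add: card_image card_Diff_singleton)
qed

theorem proposition3p2:
  shows "\<exists>A B :: nat \<Rightarrow> ('a::{finite,field} ^ 'n) set.
           cross_intersecting_F ((CARD('a) ^ CARD('n) - 1) div (CARD('a) - 1)) A B"
proof -
  define S :: "('a ^ 'n) set" where "S = UNIV - {0}"
  define C where "C = cls ` S"
  have US: "\<Union>C = S"
  proof
    show "\<Union>C \<subseteq> S" by (auto simp: C_def S_def cls_def vec_eq_iff)
    show "S \<subseteq> \<Union>C"
    proof
      fix x assume "x \<in> S"
      moreover have "x \<in> cls x" unfolding cls_def by (rule image_eqI[of _ _ 1]) auto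
      ultimately show "x \<in> \<Union>C" by (auto simp: C_def)
    qed
  qed
  have q2: "CARD('a) \<ge> 2"
  proof -
    have "{0::'a, 1} \<subseteq> UNIV" by auto
    then have "card {0::'a, 1} \<le> CARD('a)" by (rule card_mono[OF finite])
    then show ?thesis by simp
  qed
  have "(CARD('a) - 1) * card C = card (\<Union>C)"
  proof -
    have f: "finite C" by (simp add: C_def)
    have cc: "\<forall>c\<in>C. card c = CARD('a) - 1" by (auto simp: C_def S_def card_cls)
    have dj: "\<forall>c1\<in>C. \<forall>c2\<in>C. c1 \<noteq> c2 \<longrightarrow> c1 \<inter> c2 = {}"
      unfolding C_def using cls_sub by blast
    show ?thesis
      by (rule card_partition[OF f finite]) (use cc dj in blast)+
  qed
  also have "\<dots> = CARD('a) ^ CARD('n) - 1" using US by (simp add: S_def card_Diff_singleton)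
  finally have X: "(CARD('a) - 1) * card C = CARD('a) ^ CARD('n) - 1" .
  have q1: "CARD('a) - 1 \<noteq> 0" using q2 by simp
  have cardC: "card C = (CARD('a) ^ CARD('n) - 1) div (CARD('a) - 1)"
  proof -
    have "card C = ((CARD('a) - 1) * card C) div (CARD('a) - 1)" using q1 by simp
    also have "\<dots> = (CARD('a) ^ CARD('n) - 1) div (CARD('a) - 1)" by (simp only: X)
    finally show ?thesis .
  qed
  define m where "m = (CARD('a) ^ CARD('n) - 1) div (CARD('a) - 1)"
  obtain h where h: "bij_betw h {1..m} C"
  proof -
    have fC: "finite C" by (simp add: C_def)
    obtain h where "bij_betw h {1..card C} C" using ex_bij_betw_nat_finite_1[OF fC] by blast
    then show ?thesis using that unfolding m_def cardC[symmetric] by blast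
  qed
  define r where "r i = (SOME a. a \<in> S \<and> h i = cls a)" for i
  have r: "r i \<in> S \<and> h i = cls (r i)" if "i \<in> {1..m}" for i
  proof -
    have "h i \<in> C" using h that unfolding bij_betw_def by blast
    then have "\<exists>a. a \<in> S \<and> h i = cls a" unfolding C_def by blast
    then show ?thesis unfolding r_def by (rule someI_ex)
  qed
  define A where "A i = {y. dotF (r i) y = 0}" for i
  define B where "B i = {y. dotF (r i) y = 1}" for i
  have "cross_intersecting_F m A B"
    unfolding cross_intersecting_F_def
  proof (intro conjI ballI allI impI)
    fix i assume i: "i \<in> {1..m}"
    show "affine_subspace_F (A i)" by (simp add: A_def aff0)
    show "affine_subspace_F (B i)" using r[OF i] by (simp add: B_def S_def aff1)
    show "A i \<inter> B i = {}" by (auto simp: A_def B_def)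
  next
    fix i j :: nat assume ij: "1 \<le> i" "i < j" "j \<le> m"
    have i: "i \<in> {1..m}" and j: "j \<in> {1..m}" using ij by auto
    have nz: "r i \<noteq> 0" "r j \<noteq> 0" using r[OF i] r[OF j] by (auto simp: S_def)
    have np: "\<forall>c. r j \<noteq> c *s r i"
    proof (intro allI notI)
      fix c assume c: "r j = c *s r i"
      then have "c \<noteq> 0" using nz by auto
      then have "r j \<in> cls (r i)" using c unfolding cls_def by auto
      moreover have "r j \<in> cls (r j)" unfolding cls_def by (rule image_eqI[of _ _ 1]) auto
      ultimately have "cls (r i) = cls (r j)" using cls_sub by blast
      then have "h i = h j" using r[OF i] r[OF j] by simp
      then have "i = j" using h i j unfolding bij_betw_def inj_on_def by blast
      then show False using ij by simp
    qed
    obtain y where "dotF (r i) y = 0" "dotF (r j) y = 1" using solve[OF nz(1) np] by blast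
    then show "A i \<inter> B j \<noteq> {}" by (auto simp: A_def B_def)
  qed
  then show ?thesis unfolding m_def by blast
qed

end
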